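(* Let $p\geq1$, $\mu>0$, and let $g:\mathbb{R}^n\to\mathbb{R}\cup\{+\infty\}$ be convex. Let $\lambda^{\ast}$ be the optimal solution of $$\min_{\lambda\in\mathbb{R}^n}\Big\{g(\lambda)+\frac{\mu}{1+\frac1p}\lVert\lambda\rVert^{1+\frac1p}\Big\},$$ and suppose $\lambda^{\ast}\neq0$. Let $\lambda^0\in\mathbb{R}^n$ with $\lambda^0\neq0$ and generate $\lambda^1,\dots,\lambda^N$ by: $t^k=\lVert\lambda^k\rVert^{\frac1p-1}$ if $\lambda^k\neq0$, $t^k=0$ otherwise, and $\lambda^{k+1}=\arg\min_{\lambda\in\mathbb{R}^n}\{g(\lambda)+\frac{\mu}{2}t^k\lVert\lambda\rVert^2\}$. Suppose $\lVert\lambda^0\rVert\leq\lVert\lambda^{\ast}\rVert$ and $\lambda^k\neq\lambda^{\ast}$ for $k=1,2,\dots,N$. Then $$\lVert\lambda^N-\lambda^{\ast}\rVert\leq\Big(1-\frac1p\Big)\lVert\lambda^{\ast}\rVert\Big(e^{(1-\frac1p)^{N-1}\ln\frac{\lVert\lambda^{\ast}\rVert}{\lVert\lambda^0\rVert}}-1\Big)\leq\frac{\lVert\lambda^{\ast}\rVert}{\lVert\lambda^0\rVert}\big(\lVert\lambda^{\ast}\rVert-\lVert\lambda^0\rVert\big)\Big(1-\frac1p\Big)^{N}.$$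
   Context: $\lVert\cdot\rVert$ is the Euclidean norm. The minimizers in the iteration are assumed to exist. *)

theory Defs
  imports "HOL-Analysis.Analysis"
begin

end

theory Submission imports Defs "HOL-Analysis.Analysis" begin

lemma quad_opt:
  fixes g :: "'a::euclidean_space \<Rightarrow> real"
  assumes D: "convex D" and cg: "convex_on D g" and x: "x \<in> D" and l: "l \<in> D" and w: "w \<ge> 0"
    and opt: "\<forall>l\<in>D. g x + w * (norm x)\<^sup>2 \<le> g l + w * (norm l)\<^sup>2"
  shows "g x - g l \<le> 2 * w * inner x (l - x)"
proof -
  let ?d = "l - x"
  have key: "g x - g l \<le> 2*w*inner x ?d + \<tau> * (w * (norm ?d)\<^sup>2)" if \<tau>: "0 < \<tau>" "\<tau> \<le> 1" for \<tau>
  proof -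
    define z where "z = (1-\<tau>) *\<^sub>R x + \<tau> *\<^sub>R l"
    have zD: "z \<in> D" using D x l \<tau> unfolding z_def by (simp add: convexD)
    have gz: "g z \<le> (1-\<tau>) * g x + \<tau> * g l" using convex_onD[OF cg, of \<tau> x l] \<tau> x l
      unfolding z_def by simp
    have zx: "z = x + \<tau> *\<^sub>R ?d" by (simp add: z_def algebra_simps)
    have nz: "(norm z)\<^sup>2 = (norm x)\<^sup>2 + 2*\<tau>*inner x ?d + \<tau>\<^sup>2 * (norm ?d)\<^sup>2"
      unfolding zx power2_norm_eq_inner by (simp add: inner_add_left inner_diff_left inner_diff_right inner_add_right inner_commute algebra_simps power2_eq_square)
    have "g x + w*(norm x)\<^sup>2 \<le> g z + w*(norm z)\<^sup>2" using opt zD by blast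
    moreover have "w*(norm z)\<^sup>2 = w*(norm x)\<^sup>2 + \<tau>*(2*w*inner x ?d) + \<tau>*(\<tau>*(w*(norm ?d)\<^sup>2))"
      by (subst nz) (simp add: algebra_simps power2_eq_square)
    moreover have "g z \<le> g x - \<tau>*g x + \<tau>*g l" using gz by (simp add: algebra_simps)
    ultimately have "\<tau> * g x - \<tau> * g l \<le> \<tau>*(2*w*inner x ?d) + \<tau>*(\<tau>*(w*(norm ?d)\<^sup>2))"
      by linarith
    hence "\<tau> * (g x - g l) \<le> \<tau> * (2*w*inner x ?d + \<tau>*(w*(norm ?d)\<^sup>2))"
      by (simp add: algebra_simps)
    thus ?thesis using \<tau> by simp
  qed
  show ?thesis
  proof (rule ccontr)
    assume nt: "\<not> g x - g l \<le> 2 * w * inner x (l - x)"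
    define e where "e = g x - g l - 2*w*inner x ?d"
    define C where "C = w*(norm ?d)\<^sup>2 + 1"
    have e: "e > 0" using nt by (simp add: e_def)
    have C: "C \<ge> 1" using w by (simp add: C_def)
    define \<tau> where "\<tau> = min 1 (e / (2*C))"
    have t0: "\<tau> > 0" using e C by (simp add: \<tau>_def)
    have t1: "\<tau> \<le> 1" by (simp add: \<tau>_def)
    have "e \<le> \<tau> * (C - 1)" using key[OF t0 t1] by (simp add: e_def C_def)
    also have "\<dots> < \<tau> * C" using t0 by simp
    also have "\<dots> \<le> e / (2*C) * C" using C by (intro mult_right_mono) (auto simp: \<tau>_def)
    also have "\<dots> = e/2" using C by simp
    finally show False using e by simp
  qed
qed

lemma tangent_powr:
  fixes X Y a :: real
  assumes a: "0 \<le> a" "a \<le> 1" and X: "X \<ge> 0" and Y: "Y > 0"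
  shows "X powr a \<le> Y powr a + a * Y powr (a - 1) * (X - Y)"
proof -
  have Ya: "Y powr (a - 1) = Y powr a / Y" using Y by (simp add: powr_diff)
  show ?thesis
  proof (cases "X = 0")
    case True
    have "0 \<le> (1 - a) * Y powr a" using a by simp
    thus ?thesis using True Ya Y by (simp add: algebra_simps)
  next
    case False
    hence Xp: "X > 0" using X by simp
    have "(X/Y) powr a * 1 powr (1-a) \<le> a * (X/Y) + (1-a) * 1"
      using Youngs_inequality_0[of a "1-a" "X/Y" 1] a Xp Y by simp
    hence "X powr a / Y powr a \<le> a * (X/Y) + (1-a)" using Xp Y by (simp add: powr_divide)
    hence "X powr a \<le> (a * (X/Y) + (1-a)) * Y powr a" using Y by (simp add: divide_le_eq)
    thus ?thesis using Ya Y by (simp add: algebra_simps diff_divide_distrib)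
  qed
qed

lemma combine:
  fixes g :: "'a::euclidean_space \<Rightarrow> real"
  assumes D: "convex D" and cg: "convex_on D g" and x: "x \<in> D" and y: "y \<in> D"
    and ws: "ws > 0" and wt: "ws \<le> wt"
    and optx: "\<forall>l\<in>D. g x + wt * (norm x)\<^sup>2 \<le> g l + wt * (norm l)\<^sup>2"
    and opty: "\<forall>l\<in>D. g y + ws * (norm y)\<^sup>2 \<le> g l + ws * (norm l)\<^sup>2"
  shows "ws/wt * norm y \<le> norm x \<and> norm x \<le> norm y \<and> norm (x - y) \<le> (1 - ws/wt) * norm y"
proof -
  have wt0: "wt > 0" using ws wt by simp
  have 1: "g x - g y \<le> 2 * wt * inner x (y - x)" using quad_opt[OF D cg x y _ optx] wt0 by simp
  have 2: "g y - g x \<le> 2 * ws * inner y (x - y)" using quad_opt[OF D cg y x _ opty] ws by simp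
  have S: "0 \<le> wt * inner x (y - x) + ws * inner y (x - y)" using 1 2 ws wt0 by simp
  have S': "wt * (norm x)\<^sup>2 + ws * (norm y)\<^sup>2 \<le> (wt + ws) * inner x y"
    using S by (simp add: power2_norm_eq_inner inner_diff_left inner_diff_right inner_commute algebra_simps)
  have CS: "inner x y \<le> norm x * norm y" by (rule norm_cauchy_schwarz)
  have H: "(wt * norm x - ws * norm y) * (norm x - norm y) \<le> 0"
  proof -
    have "wt * (norm x)\<^sup>2 + ws * (norm y)\<^sup>2 \<le> (wt + ws) * (norm x * norm y)"
      using S' CS mult_left_mono[OF CS, of "wt+ws"] ws wt0 by linarith
    thus ?thesis by (simp add: algebra_simps power2_eq_square)
  qed
  have le: "norm x \<le> norm y"
  proof (rule ccontr)
    assume "\<not> ?thesis"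
    hence a: "norm x - norm y > 0" by simp
    have "wt * norm x - ws * norm y \<ge> ws * (norm x - norm y)"
      using wt mult_right_mono[OF wt, of "norm x"] by (simp add: algebra_simps)
    hence "wt * norm x - ws * norm y > 0" using a ws by (smt (verit) mult_pos_pos)
    with a have "(wt * norm x - ws * norm y) * (norm x - norm y) > 0" by simp
    with H show False by simp
  qed
  have ge: "ws/wt * norm y \<le> norm x"
  proof (rule ccontr)
    assume nt: "\<not> ws/wt * norm y \<le> norm x"
    hence "wt * norm x < ws * norm y" using wt0 by (simp add: field_simps)
    moreover have "ws/wt * norm y \<le> norm y"
    proof -
      have "ws/wt \<le> 1" using ws wt wt0 by simp
      from mult_right_mono[OF this norm_ge_zero[of y]] show "ws/wt * norm y \<le> norm y" by simp
    qed
    ultimately have "wt * norm x - ws * norm y < 0" "norm x - norm y < 0" using nt by auto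
    hence "(wt * norm x - ws * norm y) * (norm x - norm y) > 0" by (simp add: mult_neg_neg)
    with H show False by simp
  qed
  have T: "wt * (norm (x - y))\<^sup>2 \<le> (wt - ws) * inner y (y - x)"
    using S by (simp add: power2_norm_eq_inner inner_diff_left inner_diff_right inner_commute algebra_simps)
  have T2: "(wt - ws) * inner y (y - x) \<le> (wt - ws) * (norm y * norm (x - y))"
  proof -
    have "inner y (y - x) \<le> norm y * norm (y - x)" by (rule norm_cauchy_schwarz)
    thus ?thesis using wt by (simp add: mult_left_mono norm_minus_commute)
  qed
  have dist: "norm (x - y) \<le> (1 - ws/wt) * norm y"
  proof (cases "norm (x - y) = 0")
    case True thus ?thesis using ws wt wt0 by simp
  next
    case False
    hence np: "norm (x - y) > 0" by simp
    have "wt * norm (x - y) * norm (x - y) \<le> (wt - ws) * norm y * norm (x - y)"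
      using T T2 by (simp add: power2_eq_square algebra_simps)
    hence "wt * norm (x - y) \<le> (wt - ws) * norm y" using np by simp
    thus ?thesis using wt0 by (simp add: field_simps)
  qed
  show ?thesis using le ge dist by simp
qed

lemma sq_powr: fixes u a :: real assumes "u \<ge> 0" shows "(u\<^sup>2) powr a = u powr (2*a)"
proof (cases "u = 0")
  case True thus ?thesis by simp
next
  case False
  have "u\<^sup>2 = u powr 2" using assms False by (simp add: powr_numeral)
  hence "(u\<^sup>2) powr a = (u powr 2) powr a" by simp
  also have "\<dots> = u powr (2*a)" by (simp add: powr_powr)
  finally show ?thesis .
qed

theorem theoremA1:
  fixes D :: "'a::euclidean_space set" and g :: "'a \<Rightarrow> real"
    and p \<mu> :: real and N :: nat and lam :: "nat \<Rightarrow> 'a" and lstar :: 'a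
  assumes p: "p \<ge> 1" and mu: "\<mu> > 0"
    and convD: "convex D" and convg: "convex_on D g"
    and opt_mem: "lstar \<in> D"
    and opt: "\<forall>l\<in>D. g lstar + \<mu> / (1 + 1/p) * norm lstar powr (1 + 1/p)
                     \<le> g l + \<mu> / (1 + 1/p) * norm l powr (1 + 1/p)"
    and lstar_nz: "lstar \<noteq> 0"
    and lam0_nz: "lam 0 \<noteq> 0"
    and iter_mem: "\<forall>k<N. lam (Suc k) \<in> D"
    and iter: "\<forall>k<N. \<forall>l\<in>D.
        g (lam (Suc k)) + \<mu> / 2 * (if lam k \<noteq> 0 then norm (lam k) powr (1/p - 1) else 0) * (norm (lam (Suc k)))\<^sup>2
        \<le> g l + \<mu> / 2 * (if lam k \<noteq> 0 then norm (lam k) powr (1/p - 1) else 0) * (norm l)\<^sup>2"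
    and N: "N \<ge> 1"
    and init: "norm (lam 0) \<le> norm lstar"
    and neq: "\<forall>k\<in>{1..N}. lam k \<noteq> lstar"
  shows "norm (lam N - lstar)
           \<le> (1 - 1/p) * norm lstar * (exp ((1 - 1/p) ^ (N - 1) * ln (norm lstar / norm (lam 0))) - 1)
       \<and> (1 - 1/p) * norm lstar * (exp ((1 - 1/p) ^ (N - 1) * ln (norm lstar / norm (lam 0))) - 1)
           \<le> norm lstar / norm (lam 0) * (norm lstar - norm (lam 0)) * (1 - 1/p) ^ N"
proof -
  define c where "c = 1 - 1/p"
  define R where "R = norm lstar"
  define r where "r k = norm (lam k)" for k
  define e where "e = 1/p - 1"
  have q0: "0 < 1/p" "1/p \<le> 1" using p by auto
  have c0: "0 \<le> c" "c < 1" using q0 by (auto simp: c_def)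
  have ec: "e = - c" by (simp add: c_def e_def)
  have R0: "R > 0" using lstar_nz by (simp add: R_def)
  define ws where "ws = \<mu>/2 * R powr e"
  have ws0: "ws > 0" using mu R0 by (simp add: ws_def)
  have opty: "\<forall>l\<in>D. g lstar + ws * (norm lstar)\<^sup>2 \<le> g l + ws * (norm l)\<^sup>2"
  proof
    fix l assume l: "l \<in> D"
    define a where "a = (1 + 1/p)/2"
    have a: "0 \<le> a" "a \<le> 1" using q0 by (auto simp: a_def)
    have T: "((norm l)\<^sup>2) powr a \<le> (R\<^sup>2) powr a + a * (R\<^sup>2) powr (a - 1) * ((norm l)\<^sup>2 - R\<^sup>2)"
      using tangent_powr[OF a, of "(norm l)\<^sup>2" "R\<^sup>2"] R0 by simp
    have a2: "2*a = 1 + 1/p" "2*(a-1) = e" by (simp_all add: a_def e_def field_simps)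
    have e1: "((norm l)\<^sup>2) powr a = norm l powr (1 + 1/p)" by (simp only: sq_powr norm_ge_zero a2)
    have e2: "(R\<^sup>2) powr a = R powr (1 + 1/p)" using R0 by (simp only: sq_powr less_imp_le a2)
    have e3: "(R\<^sup>2) powr (a - 1) = R powr e" using R0 by (simp only: sq_powr less_imp_le a2)
    have T': "norm l powr (1 + 1/p) \<le> R powr (1 + 1/p) + a * R powr e * ((norm l)\<^sup>2 - R\<^sup>2)"
      using T e1 e2 e3 by simp
    have "1 + 1/p > 0" using q0 by linarith
    hence pos: "\<mu> / (1 + 1/p) > 0" using mu by simp
    have "\<mu> / (1 + 1/p) * norm l powr (1 + 1/p) \<le> \<mu> / (1 + 1/p) * (R powr (1 + 1/p) + a * R powr e * ((norm l)\<^sup>2 - R\<^sup>2))"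
      using mult_left_mono[OF T'] pos by (simp only: less_imp_le)
    also have "\<dots> = \<mu> / (1 + 1/p) * R powr (1 + 1/p) + ws * ((norm l)\<^sup>2 - R\<^sup>2)"
    proof -
      have nz: "1 + 1/p \<noteq> 0" using q0 by linarith
      have Ka: "\<mu> / (1 + 1/p) * a = \<mu>/2" using nz by (simp add: a_def)
      have E: "\<mu> / (1 + 1/p) * (R powr (1 + 1/p) + a * R powr e * ((norm l)\<^sup>2 - R\<^sup>2))
         = \<mu> / (1 + 1/p) * R powr (1 + 1/p) + (\<mu> / (1 + 1/p) * a) * (R powr e * ((norm l)\<^sup>2 - R\<^sup>2))"
        by (simp only: distrib_left mult.assoc)
      show ?thesis unfolding E Ka ws_def by (simp only: mult.assoc)
    qed
    finally have "\<mu> / (1 + 1/p) * norm l powr (1 + 1/p) \<le> \<mu> / (1 + 1/p) * R powr (1 + 1/p) + ws * ((norm l)\<^sup>2 - R\<^sup>2)" .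
    moreover have "g lstar + \<mu> / (1 + 1/p) * R powr (1 + 1/p) \<le> g l + \<mu> / (1 + 1/p) * norm l powr (1 + 1/p)"
      using opt l by (simp add: R_def)
    ultimately show "g lstar + ws * (norm lstar)\<^sup>2 \<le> g l + ws * (norm l)\<^sup>2"
      by (simp add: R_def algebra_simps)
  qed
  have step: "exp (-c * (ln R - ln (r k))) * R \<le> r (Suc k) \<and> r (Suc k) \<le> R
      \<and> norm (lam (Suc k) - lstar) \<le> (1 - exp (-c * (ln R - ln (r k)))) * R"
    if k: "k < N" and rk: "r k > 0" "r k \<le> R" for k
  proof -
    define wt where "wt = \<mu>/2 * r k powr e"
    have wt0: "wt > 0" using mu rk by (simp add: wt_def)
    have ratio: "ws / wt = exp (-c * (ln R - ln (r k)))"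
      using R0 rk mu by (simp add: ws_def wt_def powr_def ec exp_diff[symmetric] algebra_simps)
    have lnle: "ln R - ln (r k) \<ge> 0" using rk R0 by simp
    have "ws / wt \<le> 1" unfolding ratio using c0 lnle by (simp add: mult_nonneg_nonneg)
    hence wsle: "ws \<le> wt" using wt0 by (simp add: divide_le_eq)
    have lk: "lam k \<noteq> 0" using rk by (auto simp: r_def)
    have optx: "\<forall>l\<in>D. g (lam (Suc k)) + wt * (norm (lam (Suc k)))\<^sup>2 \<le> g l + wt * (norm l)\<^sup>2"
    proof
      fix l assume "l \<in> D"
      from iter[rule_format, OF k this] lk
      show "g (lam (Suc k)) + wt * (norm (lam (Suc k)))\<^sup>2 \<le> g l + wt * (norm l)\<^sup>2"
        by (simp add: wt_def r_def e_def)
    qed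
    have "ws/wt * norm lstar \<le> norm (lam (Suc k)) \<and> norm (lam (Suc k)) \<le> norm lstar \<and>
       norm (lam (Suc k) - lstar) \<le> (1 - ws/wt) * norm lstar"
      using combine[OF convD convg _ opt_mem ws0 wsle optx opty] iter_mem k by simp
    thus ?thesis unfolding ratio by (simp add: R_def r_def)
  qed
  define L where "L = ln R - ln (r 0)"
  have ind: "k \<le> N \<longrightarrow> 0 < r k \<and> r k \<le> R \<and> ln R - ln (r k) \<le> c^k * L" for k
  proof (induction k)
    case 0 thus ?case using lam0_nz init by (simp add: r_def R_def L_def)
  next
    case (Suc k)
    show ?case
    proof
      assume sk: "Suc k \<le> N"
      hence IH: "0 < r k" "r k \<le> R" "ln R - ln (r k) \<le> c^k * L" using Suc.IH by auto
      from step[of k] sk IH have A: "exp (-c * (ln R - ln (r k))) * R \<le> r (Suc k)" "r (Suc k) \<le> R" by auto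
      have pos: "exp (-c * (ln R - ln (r k))) * R > 0" using R0 by simp
      hence rs: "r (Suc k) > 0" using A by linarith
      have "ln (exp (-c * (ln R - ln (r k))) * R) \<le> ln (r (Suc k))" using A pos by simp
      hence "-c * (ln R - ln (r k)) + ln R \<le> ln (r (Suc k))" using R0 by (simp add: ln_mult)
      hence "ln R - ln (r (Suc k)) \<le> c * (ln R - ln (r k))" by simp
      also have "\<dots> \<le> c * (c^k * L)" using IH(3) c0 by (simp add: mult_left_mono)
      finally show "0 < r (Suc k) \<and> r (Suc k) \<le> R \<and> ln R - ln (r (Suc k)) \<le> c^(Suc k) * L"
        using rs A by simp
    qed
  qed
  obtain m where m: "N = Suc m" using N by (cases N) auto
  have Im: "0 < r m" "r m \<le> R" "ln R - ln (r m) \<le> c^m * L" using ind[of m] m by auto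
  have St: "norm (lam N - lstar) \<le> (1 - exp (-c * (ln R - ln (r m)))) * R"
    using step[of m] Im m by simp
  define a where "a = c^m * L"
  have r00: "r 0 > 0" using lam0_nz by (simp add: r_def)
  have L0: "L \<ge> 0" using init r00 R0 unfolding L_def R_def r_def using ln_le_cancel_iff[of "norm (lam 0)" "norm lstar"] by linarith
  have Lln: "ln (norm lstar / norm (lam 0)) = L" using r00 R0 by (simp add: L_def R_def r_def ln_div)
  have a0: "a \<ge> 0" using L0 c0 by (simp add: a_def)
  have "exp (-c * a) \<le> exp (-c * (ln R - ln (r m)))" using Im(3) c0 by (simp add: a_def mult_left_mono)
  hence "norm (lam N - lstar) \<le> (1 - exp (-c * a)) * R" using St R0 by (smt (verit) mult_right_mono)
  also have "\<dots> \<le> (c * a) * R" using exp_ge_add_one_self[of "-c*a"] R0 by (intro mult_right_mono) auto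
  also have "\<dots> \<le> c * (exp a - 1) * R" using R0 c0
    by (intro mult_right_mono mult_left_mono) (use exp_ge_add_one_self[of a] in linarith)+
  finally have P1: "norm (lam N - lstar) \<le> c * R * (exp a - 1)" by (simp add: algebra_simps)
  define \<theta> where "\<theta> = c^m"
  have th: "0 \<le> \<theta>" "\<theta> \<le> 1" using c0 by (auto simp: \<theta>_def power_le_one)
  have "exp ((1 - \<theta>) *\<^sub>R 0 + \<theta> *\<^sub>R L) \<le> (1 - \<theta>) * exp 0 + \<theta> * exp L"
    by (rule convex_onD[OF exp_convex th]) auto
  hence ex: "exp a - 1 \<le> \<theta> * (exp L - 1)" by (simp add: a_def \<theta>_def algebra_simps)
  have eL: "exp L = R / r 0" using r00 R0 by (simp add: L_def exp_diff)
  have "c * R * (exp a - 1) \<le> c * R * (\<theta> * (exp L - 1))"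
    using ex c0 R0 by (intro mult_left_mono) auto
  also have "\<dots> = R / r 0 * (R - r 0) * c ^ N"
    using r00 by (simp add: eL m \<theta>_def field_simps)
  finally have P2: "c * R * (exp a - 1) \<le> R / r 0 * (R - r 0) * c ^ N" .
  show ?thesis using P1 P2 unfolding Lln by (simp add: a_def c_def R_def r_def m)
qed

end
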